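(* Let $S$ be a space homeomorphic to $\{0\}\cup\{1/n: n\in\mathbb{N}\}\subset\mathbb{R}$ and let $E$ be a Banach space. Then there exists a continuous surjective mapping $T: C_p(S) \rightarrow E_w$ if and only if $E$ is separable.
   Context: $C_p(S)$ is the space of continuous real-valued functions on $S$ with the pointwise convergence topology; $E_w$ is $E$ with its weak topology. *)

theory Defs
  imports "HOL-Analysis.Analysis"
begin

definition weak_topology :: "('e::real_normed_vector) topology" where
  "weak_topology = topology_generated_by
     {f -` U | (f :: 'e \<Rightarrow> real) U. bounded_linear f \<and> open U}"

text \<open>Functions are represented
  extensionally on topspace X, as in product_topology.\<close>
definition Cp :: "'a topology \<Rightarrow> ('a \<Rightarrow> real) topology" where
  "Cp X = subtopology (product_topology (\<lambda>_. euclideanreal) (topspace X))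
             {f. continuous_map X euclideanreal f}"

definition conv_seq :: "real topology" where
  "conv_seq = subtopology euclideanreal (insert 0 {1 / real n | n. n \<ge> 1})"

end

theory Submission
  imports Defs "HOL-Library.Countable_Set"
begin

definition good_graph :: "('a::real_vector \<Rightarrow> real) \<Rightarrow> 'a \<Rightarrow> ('a \<times> real) set \<Rightarrow> bool" where
  "good_graph p x0 G \<longleftrightarrow>
     (\<forall>x a y b. (x,a) \<in> G \<longrightarrow> (y,b) \<in> G \<longrightarrow> (x+y, a+b) \<in> G) \<and>
     (\<forall>x a c. (x,a) \<in> G \<longrightarrow> (c *\<^sub>R x, c*a) \<in> G) \<and>
     (\<forall>x a b. (x,a) \<in> G \<longrightarrow> (x,b) \<in> G \<longrightarrow> a = b) \<and>
     (\<forall>x a. (x,a) \<in> G \<longrightarrow> a \<le> p x) \<and> (x0, p x0) \<in> G"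

lemma good_graphD:
  assumes "good_graph p x0 G"
  shows "\<And>x a y b. (x,a) \<in> G \<Longrightarrow> (y,b) \<in> G \<Longrightarrow> (x+y, a+b) \<in> G"
    and "\<And>x a c. (x,a) \<in> G \<Longrightarrow> (c *\<^sub>R x, c*a) \<in> G"
    and "\<And>x a b. (x,a) \<in> G \<Longrightarrow> (x,b) \<in> G \<Longrightarrow> a = b"
    and "\<And>x a. (x,a) \<in> G \<Longrightarrow> a \<le> p x"
    and "(x0, p x0) \<in> G"
  using assms unfolding good_graph_def by simp_all

lemma hahn_banach_sublinear:
  fixes p :: "'a::real_vector \<Rightarrow> real"
  assumes sub: "\<And>x y. p (x + y) \<le> p x + p y"
    and hom: "\<And>c x. c \<ge> 0 \<Longrightarrow> p (c *\<^sub>R x) = c * p x"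
  shows "\<exists>\<phi>. linear \<phi> \<and> (\<forall>x. \<phi> x \<le> p x) \<and> \<phi> x0 = p x0"
proof -
  have p0: "p 0 = 0" using hom[of 0 0] by simp
  have pneg: "- p x \<le> p (- x)" for x
    using sub[of x "-x"] p0 by simp
  define G0 where "G0 = {(c *\<^sub>R x0, c * p x0) | c. True}"
  have G0: "good_graph p x0 G0"
    unfolding good_graph_def
  proof (intro conjI allI impI)
    fix x a y b assume "(x,a) \<in> G0" "(y,b) \<in> G0"
    then obtain c d where "x = c *\<^sub>R x0" "a = c * p x0" "y = d *\<^sub>R x0" "b = d * p x0"
      unfolding G0_def by auto
    then show "(x+y, a+b) \<in> G0" unfolding G0_def
      by (auto intro!: exI[of _ "c+d"] simp: scaleR_add_left distrib_right)
  next
    fix x a c assume "(x,a) \<in> G0"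
    then obtain d where "x = d *\<^sub>R x0" "a = d * p x0" unfolding G0_def by auto
    then show "(c *\<^sub>R x, c*a) \<in> G0" unfolding G0_def
      by (auto intro!: exI[of _ "c*d"])
  next
    fix x a b assume "(x,a) \<in> G0" "(x,b) \<in> G0"
    then obtain c d where cd: "x = c *\<^sub>R x0" "a = c * p x0" "x = d *\<^sub>R x0" "b = d * p x0"
      unfolding G0_def by blast
    show "a = b"
    proof (cases "x0 = 0")
      case True then show ?thesis using cd p0 by simp
    next
      case False
      then have "c = d" using cd by (metis scaleR_cancel_right)
      then show ?thesis using cd by simp
    qed
  next
    fix x a assume "(x,a) \<in> G0"
    then obtain c where c: "x = c *\<^sub>R x0" "a = c * p x0" unfolding G0_def by auto
    show "a \<le> p x"
    proof (cases "c \<ge> 0")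
      case True then show ?thesis using c hom by simp
    next
      case False
      then have "p x = p ((-c) *\<^sub>R (- x0))" using c by simp
      also have "\<dots> = (-c) * p (- x0)" using False hom[of "-c" "-x0"] by simp
      moreover have "(-c) * (- p x0) \<le> (-c) * p (- x0)"
        using pneg[of x0] False by (intro mult_left_mono) auto
      ultimately show ?thesis using c by simp
    qed
  next
    show "(x0, p x0) \<in> G0" unfolding G0_def by (auto intro!: exI[of _ 1])
  qed
  define A where "A = {G. good_graph p x0 G}"
  have "\<forall>C\<in>chains A. \<exists>U\<in>A. \<forall>X\<in>C. X \<subseteq> U"
  proof
    fix C assume C: "C \<in> chains A"
    show "\<exists>U\<in>A. \<forall>X\<in>C. X \<subseteq> U"
    proof (cases "C = {}")
      case True then show ?thesis using G0 A_def by auto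
    next
      case False
      have CA: "C \<subseteq> A" and ch: "\<And>X Y. X \<in> C \<Longrightarrow> Y \<in> C \<Longrightarrow> X \<subseteq> Y \<or> Y \<subseteq> X"
        using C unfolding chains_def chain_subset_def by auto
      have gd: "\<And>X. X \<in> C \<Longrightarrow> good_graph p x0 X" using CA A_def by auto
      have two: "\<exists>Z\<in>C. (x,a) \<in> Z \<and> (y,b) \<in> Z" if hxy: "(x,a) \<in> \<Union>C" "(y,b) \<in> \<Union>C" for x a y b
      proof -
        obtain Z1 Z2 where Z: "Z1 \<in> C" "Z2 \<in> C" "(x,a) \<in> Z1" "(y,b) \<in> Z2"
          using hxy by blast
        show ?thesis
        proof (cases "Z1 \<subseteq> Z2")
          case True then show ?thesis using Z by blast
        next
          case False then have "Z2 \<subseteq> Z1" using ch[OF Z(1,2)] by simp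
          then show ?thesis using Z by blast
        qed
      qed
      have "good_graph p x0 (\<Union>C)"
        unfolding good_graph_def
      proof (intro conjI allI impI)
        fix x a y b assume "(x,a) \<in> \<Union>C" "(y,b) \<in> \<Union>C"
        then obtain Z where "Z \<in> C" "(x,a) \<in> Z" "(y,b) \<in> Z" using two by blast
        then show "(x+y, a+b) \<in> \<Union>C" using good_graphD(1)[OF gd[of Z]] by blast
      next
        fix x a c assume "(x,a) \<in> \<Union>C"
        then obtain Z where "Z \<in> C" "(x,a) \<in> Z" by blast
        then show "(c *\<^sub>R x, c*a) \<in> \<Union>C" using good_graphD(2)[OF gd[of Z]] by blast
      next
        fix x a b assume "(x,a) \<in> \<Union>C" "(x,b) \<in> \<Union>C"
        then obtain Z where "Z \<in> C" "(x,a) \<in> Z" "(x,b) \<in> Z" using two by blast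
        then show "a = b" using good_graphD(3)[OF gd[of Z]] by blast
      next
        fix x a assume "(x,a) \<in> \<Union>C"
        then obtain Z where "Z \<in> C" "(x,a) \<in> Z" by blast
        then show "a \<le> p x" using good_graphD(4)[OF gd[of Z]] by blast
      next
        obtain Z where "Z \<in> C" using False by blast
        then show "(x0, p x0) \<in> \<Union>C" using good_graphD(5)[OF gd[of Z]] by blast
      qed
      then show ?thesis using A_def by auto
    qed
  qed
  from Zorn_Lemma2[OF this] obtain M where MA: "M \<in> A" and Mmax: "\<And>X. X \<in> A \<Longrightarrow> M \<subseteq> X \<Longrightarrow> X = M"
    by blast
  have Mg: "good_graph p x0 M" using MA A_def by auto
  have add: "\<And>x a y b. (x,a) \<in> M \<Longrightarrow> (y,b) \<in> M \<Longrightarrow> (x+y, a+b) \<in> M"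
    and scl: "\<And>x a c. (x,a) \<in> M \<Longrightarrow> (c *\<^sub>R x, c*a) \<in> M"
    and funM: "\<And>x a b. (x,a) \<in> M \<Longrightarrow> (x,b) \<in> M \<Longrightarrow> a = b"
    and dom: "\<And>x a. (x,a) \<in> M \<Longrightarrow> a \<le> p x"
    and x0M: "(x0, p x0) \<in> M"
    using good_graphD[OF Mg] by blast+
  have zeroM: "(0, 0) \<in> M" using scl[OF x0M, of 0] by simp
  have total: "\<exists>a. (z,a) \<in> M" for z
  proof (rule ccontr)
    assume nz: "\<not> (\<exists>a. (z,a) \<in> M)"
    define L where "L = {a - p (x - z) | x a. (x,a) \<in> M}"
    have Lne: "L \<noteq> {}" using zeroM L_def by auto
    have key: "a - p (x - z) \<le> p (y + z) - b" if "(x,a) \<in> M" "(y,b) \<in> M" for x a y b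
    proof -
      have "a + b \<le> p (x + y)" using dom[OF add[OF that]] .
      also have "\<dots> \<le> p (x - z) + p (y + z)" using sub[of "x - z" "y + z"] by simp
      finally show ?thesis by simp
    qed
    have bdd: "bdd_above L"
      unfolding bdd_above_def L_def using key[OF _ zeroM] by auto
    define c where "c = Sup L"
    have c_ge: "a - p (x - z) \<le> c" if "(x,a) \<in> M" for x a
      unfolding c_def by (rule cSup_upper[OF _ bdd]) (use that L_def in auto)
    have c_le: "c \<le> p (y + z) - b" if "(y,b) \<in> M" for y b
      unfolding c_def by (rule cSup_least[OF Lne]) (use key[OF _ that] L_def in auto)
    define M' where "M' = {(x + t *\<^sub>R z, a + t * c) | x a t. (x,a) \<in> M}"
    have M'I: "(x + t *\<^sub>R z, a + t * c) \<in> M'" if "(x,a) \<in> M" for x a t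
      unfolding M'_def using that by blast
    have M'g: "good_graph p x0 M'"
      unfolding good_graph_def
    proof (intro conjI allI impI)
      fix x a y b assume "(x,a) \<in> M'" "(y,b) \<in> M'"
      then obtain x1 a1 t1 x2 a2 t2 where h: "x = x1 + t1 *\<^sub>R z" "a = a1 + t1 * c" "(x1,a1) \<in> M"
        "y = x2 + t2 *\<^sub>R z" "b = a2 + t2 * c" "(x2,a2) \<in> M"
        unfolding M'_def by blast
      show "(x+y, a+b) \<in> M'"
        using M'I[OF add[OF h(3) h(6)], of "t1+t2"] h by (simp add: algebra_simps)
    next
      fix x a d assume "(x,a) \<in> M'"
      then obtain x1 a1 t1 where h: "x = x1 + t1 *\<^sub>R z" "a = a1 + t1 * c" "(x1,a1) \<in> M"
        unfolding M'_def by blast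
      show "(d *\<^sub>R x, d*a) \<in> M'"
        using M'I[OF scl[OF h(3), of d], of "d*t1"] h by (simp add: algebra_simps)
    next
      fix x a b assume "(x,a) \<in> M'" "(x,b) \<in> M'"
      then obtain x1 a1 t1 x2 a2 t2 where h: "x = x1 + t1 *\<^sub>R z" "a = a1 + t1 * c" "(x1,a1) \<in> M"
        "x = x2 + t2 *\<^sub>R z" "b = a2 + t2 * c" "(x2,a2) \<in> M"
        unfolding M'_def by blast
      show "a = b"
      proof (cases "t1 = t2")
        case True
        then have "x1 = x2" using h by simp
        then show ?thesis using funM[of x1 a1 a2] h True by simp
      next
        case False
        have d: "(x1 + (-1) *\<^sub>R x2, a1 + (-1) * a2) \<in> M" using add[OF h(3) scl[OF h(6)]] .
        have "x1 - x2 = (t2 - t1) *\<^sub>R z" using h by (simp add: algebra_simps)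
        then have "z = (1/(t2 - t1)) *\<^sub>R (x1 + (-1) *\<^sub>R x2)" using False by simp
        then have "(z, (1/(t2 - t1)) * (a1 + (-1) * a2)) \<in> M" using scl[OF d, of "1/(t2 - t1)"] by simp
        then show ?thesis using nz by blast
      qed
    next
      fix x a assume "(x,a) \<in> M'"
      then obtain x1 a1 t where h: "x = x1 + t *\<^sub>R z" "a = a1 + t * c" "(x1,a1) \<in> M"
        unfolding M'_def by blast
      show "a \<le> p x"
      proof (cases t "0::real" rule: linorder_cases)
        case equal then show ?thesis using h dom by simp
      next
        case greater
        have "c \<le> p ((1/t) *\<^sub>R x1 + z) - (1/t) * a1" using c_le[OF scl[OF h(3), of "1/t"]] .
        then have "t * c \<le> t * (p ((1/t) *\<^sub>R x1 + z) - (1/t) * a1)" using greater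
          by (intro mult_left_mono) auto
        then have "t * c \<le> t * p ((1/t) *\<^sub>R x1 + z) - a1" using greater
          by (simp add: right_diff_distrib)
        also have "t * p ((1/t) *\<^sub>R x1 + z) = p (t *\<^sub>R ((1/t) *\<^sub>R x1 + z))" using hom greater by simp
        also have "t *\<^sub>R ((1/t) *\<^sub>R x1 + z) = x" using h greater by (simp add: scaleR_add_right)
        finally show ?thesis using h by simp
      next
        case less
        define s where "s = - t"
        have s: "s > 0" using less s_def by simp
        have "(1/s) * a1 - p ((1/s) *\<^sub>R x1 - z) \<le> c" using c_ge[OF scl[OF h(3), of "1/s"]] .
        then have "s * ((1/s) * a1 - p ((1/s) *\<^sub>R x1 - z)) \<le> s * c" using s
          by (intro mult_left_mono) auto
        then have "a1 - s * p ((1/s) *\<^sub>R x1 - z) \<le> s * c" using s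
          by (simp add: right_diff_distrib)
        also have "s * p ((1/s) *\<^sub>R x1 - z) = p (s *\<^sub>R ((1/s) *\<^sub>R x1 - z))" using hom s by simp
        also have "s *\<^sub>R ((1/s) *\<^sub>R x1 - z) = x" using h s s_def by (simp add: scaleR_diff_right)
        finally show ?thesis using h s_def by simp
      qed
    next
      show "(x0, p x0) \<in> M'" using M'I[OF x0M, of 0] by simp
    qed
    have "M \<subseteq> M'" using M'I[of _ _ 0] by auto
    then have "M' = M" using Mmax M'g A_def by auto
    moreover have "(z, c) \<in> M'" using M'I[OF zeroM, of 1] by simp
    ultimately show False using nz by auto
  qed
  define \<phi> where "\<phi> x = (SOME a. (x,a) \<in> M)" for x
  have \<phi>M: "(x, \<phi> x) \<in> M" for x using total[of x] unfolding \<phi>_def by (metis someI_ex)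
  have \<phi>eq: "(x,a) \<in> M \<Longrightarrow> \<phi> x = a" for x a using funM \<phi>M by blast
  have "linear \<phi>"
  proof (rule linearI)
    fix x y show "\<phi> (x + y) = \<phi> x + \<phi> y" using \<phi>eq[OF add[OF \<phi>M \<phi>M]] .
  next
    fix c x show "\<phi> (c *\<^sub>R x) = c *\<^sub>R \<phi> x" using \<phi>eq[OF scl[OF \<phi>M]] by simp
  qed
  moreover have "\<forall>x. \<phi> x \<le> p x" using dom \<phi>M by blast
  moreover have "\<phi> x0 = p x0" using \<phi>eq[OF x0M] .
  ultimately show ?thesis by blast
qed

lemma topspace_weak_topology [simp]: "topspace (weak_topology :: ('e::real_normed_vector) topology) = UNIV"
proof -
  have "UNIV \<in> {f -` U | (f :: 'e \<Rightarrow> real) U. bounded_linear f \<and> open U}"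
    by (rule CollectI, rule exI[of _ "\<lambda>_. 0"], rule exI[of _ UNIV]) (simp add: bounded_linear_zero)
  then show ?thesis unfolding weak_topology_def topology_generated_by_topspace by blast
qed

lemma openin_weak_functional:
  fixes f :: "'e::real_normed_vector \<Rightarrow> real"
  assumes "bounded_linear f" "open U"
  shows "openin weak_topology (f -` U)"
  unfolding weak_topology_def by (rule topology_generated_by_Basis) (use assms in blast)

lemma scaleR_sum_list:
  fixes l :: "(real \<times> 'a::real_vector) list"
  shows "c *\<^sub>R sum_list (map (\<lambda>(q,d). q *\<^sub>R d) l) = sum_list (map (\<lambda>(q,d). q *\<^sub>R d) (map (\<lambda>(q,d). (c*q, d)) l))"
  by (induction l) (auto simp: scaleR_add_right)

lemma weak_separable_imp_separable:
  assumes "separable_space (weak_topology :: ('e::real_normed_vector) topology)"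
  shows "separable_space (euclidean :: 'e topology)"
proof -
  obtain D where D: "countable D" "weak_topology closure_of D = (UNIV :: 'e set)"
    using assms unfolding separable_space_def by auto
  define sl where "sl l = sum_list (map (\<lambda>(q,d). q *\<^sub>R d) l)" for l :: "(real \<times> 'e) list"
  define A where "A = sl ` lists (\<rat> \<times> D)"
  have cA: "countable A" unfolding A_def using D(1) countable_rat by auto
  have A0: "0 \<in> A" unfolding A_def sl_def by (auto intro!: image_eqI[of _ _ "[]"])
  have Aadd: "a + b \<in> A" if ab: "a \<in> A" "b \<in> A" for a b
  proof -
    obtain l1 l2 where "l1 \<in> lists (\<rat> \<times> D)" "l2 \<in> lists (\<rat> \<times> D)" "a = sl l1" "b = sl l2"
      using ab unfolding A_def by blast
    then show ?thesis unfolding A_def sl_def by (auto intro!: image_eqI[of _ _ "l1 @ l2"])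
  qed
  have Ascl: "q *\<^sub>R a \<in> A" if aq: "a \<in> A" "q \<in> \<rat>" for a q
  proof -
    obtain l where l: "l \<in> lists (\<rat> \<times> D)" "a = sl l"
      using aq unfolding A_def by blast
    have "map (\<lambda>(r,d). (q*r, d)) l \<in> lists (\<rat> \<times> D)" using l(1) aq(2) by (auto; meson Rats_mult mem_Sigma_iff)
    then have "sl (map (\<lambda>(r,d). (q*r, d)) l) \<in> A" unfolding A_def by blast
    moreover have "sl (map (\<lambda>(r,d). (q*r, d)) l) = q *\<^sub>R a"
      using l(2) scaleR_sum_list[of q l] unfolding sl_def by simp
    ultimately show ?thesis by simp
  qed
  have DA: "D \<subseteq> A"
  proof
    fix d assume "d \<in> D"
    then have "[(1,d)] \<in> lists (\<rat> \<times> D)" by auto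
    then show "d \<in> A" unfolding A_def sl_def by (auto intro!: image_eqI[of _ _ "[(1,d)]"])
  qed
  define M where "M = closure A"
  have M0: "0 \<in> M" using A0 M_def closure_subset by blast
  have Madd: "x + y \<in> M" if xy: "x \<in> M" "y \<in> M" for x y
    unfolding M_def closure_approachable
  proof (intro allI impI)
    fix e :: real assume e: "e > 0"
    obtain a where a: "a \<in> A" "dist a x < e/2" using xy(1) e unfolding M_def closure_approachable
      by (meson half_gt_zero)
    obtain b where b: "b \<in> A" "dist b y < e/2" using xy(2) e unfolding M_def closure_approachable
      by (meson half_gt_zero)
    have "dist (a + b) (x + y) \<le> dist a x + dist b y"
      by (simp add: dist_norm add_diff_add norm_triangle_ineq)
    then show "\<exists>z\<in>A. dist z (x + y) < e" using a b Aadd by (intro bexI[of _ "a+b"]) auto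
  qed
  have Mscl: "r *\<^sub>R x \<in> M" if xM: "x \<in> M" for x r
    unfolding M_def closure_approachable
  proof (intro allI impI)
    fix e :: real assume e: "e > 0"
    define d1 where "d1 = e / (2 * (norm x + 1))"
    define d2 where "d2 = e / (2 * (\<bar>r\<bar> + 2))"
    have n1: "norm x + 1 > 0" "\<bar>r\<bar> + 2 > 0" by (simp_all add: add_nonneg_pos)
    have d1: "d1 > 0" unfolding d1_def using e n1 by simp
    have d2: "d2 > 0" unfolding d2_def using e n1 by simp
    have "r - min d1 1 < r + min d1 1" using d1 by simp
    then obtain q where q: "q \<in> \<rat>" "r - min d1 1 < q" "q < r + min d1 1"
      using Rats_dense_in_real by blast
    obtain a where a: "a \<in> A" "dist a x < d2" using xM d2 unfolding M_def closure_approachable by blast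
    have qb: "\<bar>q\<bar> \<le> \<bar>r\<bar> + 1" "\<bar>q - r\<bar> \<le> d1" using q by auto
    have "q *\<^sub>R a - r *\<^sub>R x = q *\<^sub>R (a - x) + (q - r) *\<^sub>R x" by (simp add: algebra_simps)
    then have "norm (q *\<^sub>R a - r *\<^sub>R x) \<le> \<bar>q\<bar> * norm (a - x) + \<bar>q - r\<bar> * norm x"
      by (metis norm_scaleR norm_triangle_ineq)
    also have "\<dots> \<le> (\<bar>r\<bar> + 1) * d2 + d1 * norm x"
      using qb a(2) by (intro add_mono mult_mono) (auto simp: dist_norm)
    also have "(\<bar>r\<bar> + 1) * d2 < e/2"
      unfolding d2_def using e by (simp add: field_simps)
    also have "d1 * norm x < e/2"
    proof -
      have "norm x / (norm x + 1) < 1" using n1 by simp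
      then have "(e/2) * (norm x / (norm x + 1)) < (e/2) * 1" using e by (intro mult_strict_left_mono) auto
      moreover have "d1 * norm x = (e/2) * (norm x / (norm x + 1))" unfolding d1_def by simp
      ultimately show ?thesis by simp
    qed
    finally have "dist (q *\<^sub>R a) (r *\<^sub>R x) < e" by (simp add: dist_norm)
    then show "\<exists>z\<in>A. dist z (r *\<^sub>R x) < e" using Ascl[OF a(1) q(1)] by blast
  qed
  have Mne: "M \<noteq> {}" using M0 by auto
  have inf_lb: "d \<le> infdist z M" if "\<And>m. m \<in> M \<Longrightarrow> d \<le> dist z m" for d z
    unfolding infdist_notempty[OF Mne] using that by (intro cINF_greatest Mne) auto
  define p where "p x = infdist x M" for x
  have psub: "p (x + y) \<le> p x + p y" for x y
  proof -
    have step1: "p (x+y) - dist x m1 \<le> p y" if "m1 \<in> M" for m1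
    proof -
      have "p (x+y) - dist x m1 \<le> dist y m2" if "m2 \<in> M" for m2
      proof -
        have "p (x+y) \<le> dist (x+y) (m1+m2)" unfolding p_def by (rule infdist_le) (use Madd \<open>m1 \<in> M\<close> that in auto)
        also have "\<dots> \<le> dist x m1 + dist y m2"
          by (simp add: dist_norm add_diff_add norm_triangle_ineq)
        finally show ?thesis by simp
      qed
      then show ?thesis unfolding p_def by (intro inf_lb) auto
    qed
    have "p (x+y) - p y \<le> p x" unfolding p_def
    proof (intro inf_lb)
      fix m1 assume "m1 \<in> M"
      from step1[OF this] show "infdist (x + y) M - infdist y M \<le> dist x m1"
        unfolding p_def by linarith
    qed
    then show ?thesis by simp
  qed
  have phom: "p (c *\<^sub>R x) = c * p x" if c: "c \<ge> 0" for c x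
  proof (cases "c = 0")
    case True then show ?thesis using M0 by (simp add: p_def)
  next
    case False
    then have c: "c > 0" using c by simp
    have "p (c *\<^sub>R x) / c \<le> p x" unfolding p_def
    proof (rule inf_lb)
      fix m assume "m \<in> M"
      have "infdist (c *\<^sub>R x) M \<le> dist (c *\<^sub>R x) (c *\<^sub>R m)" by (rule infdist_le) (use Mscl \<open>m \<in> M\<close> in auto)
      also have "\<dots> = c * dist x m" using c by (simp add: dist_norm flip: scaleR_diff_right)
      finally show "infdist (c *\<^sub>R x) M / c \<le> dist x m" using c by (simp add: field_simps)
    qed
    moreover have "c * p x \<le> p (c *\<^sub>R x)" unfolding p_def
    proof (rule inf_lb)
      fix m assume "m \<in> M"
      have "infdist x M \<le> dist x ((1/c) *\<^sub>R m)" by (rule infdist_le) (use Mscl \<open>m \<in> M\<close> in auto)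
      also have "\<dots> = dist (c *\<^sub>R x) m / c"
      proof -
        have "c *\<^sub>R x - m = c *\<^sub>R (x - (1/c) *\<^sub>R m)" using c by (simp add: scaleR_diff_right)
        then have "norm (c *\<^sub>R x - m) = c * norm (x - (1/c) *\<^sub>R m)" using c by simp
        then show ?thesis using c by (simp add: dist_norm)
      qed
      finally show "c * infdist x M \<le> dist (c *\<^sub>R x) m" using c by (simp add: field_simps)
    qed
    ultimately show ?thesis using c by (simp add: field_simps)
  qed
  have "closure A = UNIV"
  proof (rule ccontr)
    assume "closure A \<noteq> UNIV"
    then obtain x0 where x0: "x0 \<notin> M" unfolding M_def by auto
    obtain \<phi> where \<phi>: "linear \<phi>" "\<And>x. \<phi> x \<le> p x" "\<phi> x0 = p x0"
      using hahn_banach_sublinear[of p x0] psub phom by blast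
    have "infdist x0 M \<noteq> 0" using in_closed_iff_infdist_zero[of M x0] x0 Mne M_def by simp
    then have px0: "p x0 > 0" unfolding p_def using infdist_nonneg[of x0 M] by linarith
    have ple: "p x \<le> norm x" for x unfolding p_def using infdist_le[OF M0, of x] by simp
    have "bounded_linear \<phi>"
    proof (rule bounded_linear_intro[where K=1])
      show "\<phi> (x + y) = \<phi> x + \<phi> y" for x y using \<phi>(1) by (simp add: linear_add)
      show "\<phi> (r *\<^sub>R x) = r *\<^sub>R \<phi> x" for r x using \<phi>(1) by (simp add: linear_scale)
      show "norm (\<phi> x) \<le> norm x * 1" for x
      proof -
        have "\<phi> x \<le> norm x" using \<phi>(2) ple order_trans by blast
        moreover have "- \<phi> x \<le> norm x" using \<phi>(2)[of "-x"] ple[of "-x"] \<phi>(1) by (simp add: linear_neg)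
        ultimately show ?thesis by simp
      qed
    qed
    have \<phi>D: "\<phi> d = 0" if "d \<in> D" for d
    proof -
      have dM: "d \<in> M" using that DA M_def closure_subset by blast
      have "p d = 0" "p (-d) = 0" unfolding p_def using dM Mscl[OF dM, of "-1"] by auto
      then show ?thesis using \<phi>(2)[of d] \<phi>(2)[of "-d"] \<phi>(1) by (simp add: linear_neg)
    qed
    have op: "openin weak_topology (\<phi> -` {p x0 / 2 <..})"
      by (rule openin_weak_functional) (use \<open>bounded_linear \<phi>\<close> in auto)
    have "x0 \<in> weak_topology closure_of D" using D(2) by simp
    moreover have "x0 \<in> \<phi> -` {p x0 / 2 <..}" using \<phi>(3) px0 by simp
    ultimately obtain y where "y \<in> D" "y \<in> \<phi> -` {p x0 / 2 <..}"
      using op unfolding in_closure_of by (meson)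
    then show False using \<phi>D px0 by auto
  qed
  then show ?thesis unfolding separable_space_def using cA by (intro exI[of _ A]) auto
qed

lemma weak_open_imp_open:
  assumes "openin (weak_topology :: ('e::real_normed_vector) topology) U"
  shows "open U"
proof -
  have "generate_topology_on {f -` U | (f :: 'e \<Rightarrow> real) U. bounded_linear f \<and> open U} U"
    using assms unfolding weak_topology_def by (rule openin_topology_generated_by)
  then show ?thesis
  proof (induction rule: generate_topology_on.induct)
    case (Basis s)
    then obtain f V where "s = f -` V" "bounded_linear (f :: 'e \<Rightarrow> real)" "open V" by blast
    then show ?case
      using open_vimage[of V f] linear_continuous_at[of f] by (simp add: continuous_at_imp_continuous_on isCont_def)
  qed auto
qed

lemma continuous_map_to_weak:
  assumes "continuous_map X euclidean (T :: 'a \<Rightarrow> 'e::real_normed_vector)"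
  shows "continuous_map X weak_topology T"
  using assms weak_open_imp_open unfolding continuous_map_def by auto

lemma topspace_Cp: "topspace (Cp Z) = (\<Pi>\<^sub>E i\<in>topspace Z. UNIV) \<inter> {u. continuous_map Z euclideanreal u}"
  unfolding Cp_def by simp

lemma Cp_transfer:
  assumes "X homeomorphic_space Y"
  shows "\<exists>\<Phi>. continuous_map (Cp X) (Cp Y) \<Phi> \<and> \<Phi> ` topspace (Cp X) = topspace (Cp Y)"
proof -
  obtain f g where fg: "homeomorphic_maps X Y f g" using assms homeomorphic_space_def by blast
  have f: "continuous_map X Y f" and g: "continuous_map Y X g"
    and gf: "\<And>x. x \<in> topspace X \<Longrightarrow> g (f x) = x" and fgi: "\<And>y. y \<in> topspace Y \<Longrightarrow> f (g y) = y"
    using fg unfolding homeomorphic_maps_def by auto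
  have gY: "g y \<in> topspace X" if "y \<in> topspace Y" for y
    using continuous_map_image_subset_topspace[OF g] that by blast
  define \<Phi> where "\<Phi> u = restrict (u \<circ> g) (topspace Y)" for u :: "_ \<Rightarrow> real"
  define P where "P = subtopology (product_topology (\<lambda>_. euclideanreal) (topspace X)) {f. continuous_map X euclideanreal f}"
  have PX: "P = Cp X" unfolding P_def Cp_def ..
  have cont: "continuous_map (Cp X) (Cp Y) \<Phi>"
    unfolding Cp_def[of Y] PX[symmetric]
  proof (rule continuous_map_into_subtopology)
    show "continuous_map P (product_topology (\<lambda>_. euclideanreal) (topspace Y)) \<Phi>"
      unfolding continuous_map_componentwise
    proof (intro conjI ballI)
      show "\<Phi> ` topspace P \<subseteq> extensional (topspace Y)" unfolding \<Phi>_def by auto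
      fix k assume k: "k \<in> topspace Y"
      have "continuous_map P euclideanreal (\<lambda>u. u (g k))"
        unfolding P_def
        by (rule continuous_map_from_subtopology[OF continuous_map_product_projection]) (use gY k in simp)
      moreover have "\<Phi> u k = u (g k)" for u unfolding \<Phi>_def using k by simp
      ultimately show "continuous_map P euclideanreal (\<lambda>x. \<Phi> x k)" by simp
    qed
    show "\<Phi> \<in> topspace P \<rightarrow> {f. continuous_map Y euclideanreal f}"
    proof
      fix u assume "u \<in> topspace P"
      then have "continuous_map X euclideanreal u" unfolding PX topspace_Cp by simp
      then have "continuous_map Y euclideanreal (u \<circ> g)" using g continuous_map_compose by blast
      moreover have "\<And>x. x \<in> topspace Y \<Longrightarrow> (u \<circ> g) x = \<Phi> u x" unfolding \<Phi>_def by simp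
      ultimately have "continuous_map Y euclideanreal (\<Phi> u)" by (rule continuous_map_eq)
      then show "\<Phi> u \<in> {f. continuous_map Y euclideanreal f}" by simp
    qed
  qed
  have "\<Phi> ` topspace (Cp X) = topspace (Cp Y)"
  proof
    show "\<Phi> ` topspace (Cp X) \<subseteq> topspace (Cp Y)" using continuous_map_image_subset_topspace[OF cont] .
    show "topspace (Cp Y) \<subseteq> \<Phi> ` topspace (Cp X)"
    proof
      fix v assume v: "v \<in> topspace (Cp Y)"
      then have vc: "continuous_map Y euclideanreal v" and ve: "v \<in> extensional (topspace Y)"
        unfolding topspace_Cp by (simp_all add: PiE_def)
      define u where "u = restrict (v \<circ> f) (topspace X)"
      have "continuous_map X euclideanreal (v \<circ> f)" using f vc continuous_map_compose by blast
      moreover have "\<And>x. x \<in> topspace X \<Longrightarrow> (v \<circ> f) x = u x" unfolding u_def by simp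
      ultimately have "continuous_map X euclideanreal u" by (rule continuous_map_eq)
      moreover have "u \<in> (\<Pi>\<^sub>E i\<in>topspace X. UNIV)" unfolding u_def by (simp add: restrict_PiE_iff)
      ultimately have uX: "u \<in> topspace (Cp X)" unfolding topspace_Cp by blast
      have "\<Phi> u y = v y" for y
      proof (cases "y \<in> topspace Y")
        case True
        have "\<Phi> u y = u (g y)" unfolding \<Phi>_def using True by simp
        also have "\<dots> = v (f (g y))" unfolding u_def using gY[OF True] by simp
        also have "\<dots> = v y" using fgi[OF True] by simp
        finally show ?thesis .
      next
        case False
        then have "v y = undefined" using ve extensional_arb by metis
        moreover have "\<Phi> u y = undefined" unfolding \<Phi>_def using False by simp
        ultimately show ?thesis by simp
      qed
      then have "\<Phi> u = v" by (intro ext)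
      then show "v \<in> \<Phi> ` topspace (Cp X)" using uX by blast
    qed
  qed
  then show ?thesis using cont by blast
qed

lemma second_countable_product_real:
  assumes I: "countable I"
  shows "second_countable (product_topology (\<lambda>_. euclideanreal) I)"
proof -
  define cmp where "cmp F i = \<Inter> ((\<lambda>t. {fst (snd t)<..<snd (snd t)}) ` {t \<in> F. fst t = i})"
    for F :: "('a \<times> real \<times> real) set" and i
  define W where "W F = (\<Pi>\<^sub>E i\<in>I. cmp F i)" for F
  define \<B> where "\<B> = W ` {F. finite F \<and> F \<subseteq> I \<times> \<rat> \<times> \<rat>}"
  have "countable \<B>" unfolding \<B>_def
    by (intro countable_image countable_Collect_finite_subset) (use I countable_rat in auto)
  moreover have "openin (product_topology (\<lambda>_. euclideanreal) I) V" if VB: "V \<in> \<B>" for V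
  proof -
    obtain F where F: "finite F" "V = W F" using VB unfolding \<B>_def by blast
    have sub: "{i \<in> I. cmp F i \<noteq> topspace euclideanreal} \<subseteq> fst ` F"
    proof
      fix i assume i: "i \<in> {i \<in> I. cmp F i \<noteq> topspace euclideanreal}"
      show "i \<in> fst ` F"
      proof (rule ccontr)
        assume "i \<notin> fst ` F"
        then have e: "{t \<in> F. fst t = i} = {}" by force
        have "cmp F i = UNIV" unfolding cmp_def by (simp only: e image_empty Inter_empty)
        then show False using i by simp
      qed
    qed
    have "finite {i \<in> I. cmp F i \<noteq> topspace euclideanreal}"
      using finite_subset[OF sub] F(1) by blast
    moreover have "openin euclideanreal (cmp F i)" for i
    proof -
      have "finite {t \<in> F. fst t = i}" using F(1) by simp
      then have "open (cmp F i)" unfolding cmp_def by (intro open_Inter) auto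
      then show ?thesis by simp
    qed
    ultimately have "openin (product_topology (\<lambda>_. euclideanreal) I) (Pi\<^sub>E I (cmp F))"
      unfolding openin_PiE_gen by blast
    then show ?thesis unfolding F(2) W_def .
  qed
  moreover have "\<exists>V\<in>\<B>. x \<in> V \<and> V \<subseteq> U" if U: "openin (product_topology (\<lambda>_. euclideanreal) I) U" and x: "x \<in> U" for U x
  proof -
    obtain V where V: "finite {i \<in> I. V i \<noteq> topspace euclideanreal}" "\<And>i. i \<in> I \<Longrightarrow> openin euclideanreal (V i)"
      "x \<in> Pi\<^sub>E I V" "Pi\<^sub>E I V \<subseteq> U"
    proof -
      have "\<exists>V. finite {i \<in> I. V i \<noteq> topspace euclideanreal} \<and> (\<forall>i\<in>I. openin euclideanreal (V i)) \<and> x \<in> Pi\<^sub>E I V \<and> Pi\<^sub>E I V \<subseteq> U"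
        using U[unfolded openin_product_topology_alt] x by (rule bspec)
      then show thesis using that by blast
    qed
    define J where "J = {i \<in> I. V i \<noteq> topspace euclideanreal}"
    have ex: "\<exists>ab. fst ab \<in> \<rat> \<and> snd ab \<in> \<rat> \<and> x i \<in> {fst ab<..<snd ab} \<and> {fst ab<..<snd ab} \<subseteq> V i" if iJ: "i \<in> J" for i
    proof -
      have iI: "i \<in> I" using iJ unfolding J_def by simp
      have "open (V i)" using V(2)[OF iI] by simp
      moreover have "x i \<in> V i" using V(3) iI by (rule PiE_mem)
      ultimately obtain e where e: "e > 0" "ball (x i) e \<subseteq> V i" by (meson open_contains_ball)
      have lt1: "x i - e < x i" and lt2: "x i < x i + e" using e by auto
      obtain a where a: "a \<in> \<rat>" "x i - e < a" "a < x i" using Rats_dense_in_real[OF lt1] by blast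
      obtain b where b: "b \<in> \<rat>" "x i < b" "b < x i + e" using Rats_dense_in_real[OF lt2] by blast
      have "{a<..<b} \<subseteq> V i"
      proof
        fix y assume "y \<in> {a<..<b}"
        then have "y \<in> ball (x i) e" using a b by (auto simp: dist_real_def)
        then show "y \<in> V i" using e by blast
      qed
      then show ?thesis using a b by (intro exI[of _ "(a,b)"]) auto
    qed
    obtain ab where ab0: "\<forall>i\<in>J. fst (ab i) \<in> \<rat> \<and> snd (ab i) \<in> \<rat> \<and> x i \<in> {fst (ab i)<..<snd (ab i)} \<and> {fst (ab i)<..<snd (ab i)} \<subseteq> V i"
    proof -
      have "\<forall>i\<in>J. \<exists>ab. fst ab \<in> \<rat> \<and> snd ab \<in> \<rat> \<and> x i \<in> {fst ab<..<snd ab} \<and> {fst ab<..<snd ab} \<subseteq> V i"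
        using ex by blast
      from bchoice[OF this] show thesis using that by blast
    qed
    define F where "F = (\<lambda>i. (i, ab i)) ` J"
    have finJ: "finite J" using V(1) J_def by simp
    have FB: "W F \<in> \<B>"
    proof -
      have "F \<subseteq> I \<times> \<rat> \<times> \<rat>"
      proof
        fix t assume "t \<in> F"
        then obtain i where i: "i \<in> J" "t = (i, ab i)" unfolding F_def by blast
        then have "i \<in> I" "fst (ab i) \<in> \<rat>" "snd (ab i) \<in> \<rat>" using ab0 unfolding J_def by auto
        then show "t \<in> I \<times> \<rat> \<times> \<rat>" using i(2) by (simp add: mem_Times_iff)
      qed
      moreover have "finite F" unfolding F_def using finJ by simp
      ultimately show ?thesis unfolding \<B>_def by blast
    qed
    have comp: "cmp F i = (if i \<in> J then {fst (ab i)<..<snd (ab i)} else UNIV)" for i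
    proof -
      have "{t \<in> F. fst t = i} = (if i \<in> J then {(i, ab i)} else {})" unfolding F_def by auto
      then show ?thesis unfolding cmp_def by (cases "i \<in> J") (simp_all only: if_True if_False image_empty Inter_empty image_insert Inter_insert Inter_empty, simp_all)
    qed
    have "x \<in> W F" unfolding W_def comp using V(3) ab0 by (auto simp: PiE_iff)
    moreover have "W F \<subseteq> U"
    proof -
      have "W F \<subseteq> Pi\<^sub>E I V"
      proof
        fix y assume y: "y \<in> W F"
        have "y i \<in> V i" if iI: "i \<in> I" for i
        proof (cases "i \<in> J")
          case True
          then have "y i \<in> {fst (ab i)<..<snd (ab i)}" using y iI unfolding W_def comp by (auto simp: PiE_iff)
          then show ?thesis using ab0 True by blast
        next
          case False
          then have "V i = UNIV" using iI unfolding J_def by simp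
          then show ?thesis by simp
        qed
        moreover have "y \<in> extensional I" using y unfolding W_def by (simp add: PiE_iff)
        ultimately show "y \<in> Pi\<^sub>E I V" by (simp add: PiE_iff)
      qed
      then show ?thesis using V(4) by blast
    qed
    ultimately show ?thesis using FB by blast
  qed
  ultimately show ?thesis unfolding second_countable_def by (intro exI[of _ \<B>] conjI ballI allI impI) auto
qed

lemma separable_Cp:
  assumes "countable (topspace X)"
  shows "separable_space (Cp X)"
  unfolding Cp_def
  by (intro second_countable_imp_separable_space second_countable_subtopology second_countable_product_real assms)


definition pt :: "nat \<Rightarrow> real" where "pt n = 1 / real (Suc n)"

lemma pt_pos: "pt n > 0" unfolding pt_def by simp

lemma pt_anti: "m \<le> n \<Longrightarrow> pt n \<le> pt m"
  unfolding pt_def by (simp add: frac_le)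

lemma pt_strict: "m < n \<Longrightarrow> pt n < pt m"
  unfolding pt_def by (simp add: frac_less2)

lemma pt_inj: "pt m = pt n \<longleftrightarrow> m = n"
  by (metis linorder_neq_iff order_less_irrefl pt_strict)

lemma conv_seq_eq: "conv_seq = top_of_set (insert 0 (range pt))"
proof -
  have "{1 / real n | n. n \<ge> 1} = range pt"
  proof
    show "{1 / real n | n. n \<ge> 1} \<subseteq> range pt"
    proof
      fix x assume "x \<in> {1 / real n | n. n \<ge> 1}"
      then obtain n where n: "n \<ge> 1" "x = 1 / real n" by blast
      then have "x = pt (n - 1)" unfolding pt_def by (simp add: Suc_diff_1)
      then show "x \<in> range pt" by blast
    qed
    show "range pt \<subseteq> {1 / real n | n. n \<ge> 1}"
    proof
      fix x assume "x \<in> range pt"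
      then obtain n where "x = pt n" by blast
      then have "x = 1 / real (Suc n) \<and> Suc n \<ge> 1" unfolding pt_def by simp
      then show "x \<in> {1 / real n | n. n \<ge> 1}" by (intro CollectI exI[of _ "Suc n"])
    qed
  qed
  then show ?thesis unfolding conv_seq_def by (simp only:)
qed

lemma topspace_conv_seq: "topspace conv_seq = insert 0 (range pt)"
  unfolding conv_seq_eq by simp

lemma pt_lim: "pt \<longlonglongrightarrow> 0"
  using LIMSEQ_inverse_real_of_nat unfolding pt_def by (simp add: inverse_eq_divide)

lemma conv_seq_cont:
  fixes \<phi> :: "real \<Rightarrow> real"
  assumes lim: "(\<lambda>n. \<phi> (pt n)) \<longlonglongrightarrow> \<phi> 0"
  shows "continuous_on (insert 0 (range pt)) \<phi>"
  unfolding continuous_on_iff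
proof (intro ballI allI impI)
  fix x e assume x: "x \<in> insert 0 (range pt)" and e: "(e::real) > 0"
  show "\<exists>d>0. \<forall>x'\<in>insert 0 (range pt). dist x' x < d \<longrightarrow> dist (\<phi> x') (\<phi> x) < e"
  proof (cases "x = 0")
    case True
    obtain N where N: "\<And>n. n \<ge> N \<Longrightarrow> dist (\<phi> (pt n)) (\<phi> 0) < e"
      using lim e unfolding lim_sequentially by blast
    show ?thesis
    proof (intro exI[of _ "pt N"] conjI ballI impI)
      show "pt N > 0" by (rule pt_pos)
      fix x' assume x': "x' \<in> insert 0 (range pt)" and d: "dist x' x < pt N"
      show "dist (\<phi> x') (\<phi> x) < e"
      proof (cases "x' = 0")
        case True then show ?thesis using \<open>x = 0\<close> e by simp
      next
        case False
        then obtain n where n: "x' = pt n" using x' by blast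
        have "pt n < pt N" using d n True pt_pos[of n] by (simp add: dist_real_def)
        then have "N \<le> n" using pt_anti[of n N] by linarith
        then show ?thesis using N n True by simp
      qed
    qed
  next
    case False
    then obtain m where m: "x = pt m" using x by blast
    define d where "d = min (pt m - pt (Suc m)) (if m = 0 then 1 else pt (m - 1) - pt m)"
    have d: "d > 0" unfolding d_def using pt_strict[of m "Suc m"] pt_strict[of "m - 1" m] by auto
    show ?thesis
    proof (intro exI[of _ d] conjI ballI impI d)
      fix x' assume x': "x' \<in> insert 0 (range pt)" and dd: "dist x' x < d"
      have "x' = x"
      proof (cases "x' = 0")
        case True
        then have "pt m < d" using dd m pt_pos[of m] by (simp add: dist_real_def)
        moreover have "d \<le> pt m - pt (Suc m)" unfolding d_def by simp
        ultimately show ?thesis using pt_pos[of "Suc m"] by simp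
      next
        case False
        then obtain n where n: "x' = pt n" using x' by blast
        show ?thesis
        proof (rule ccontr)
          assume "x' \<noteq> x"
          then have "n \<noteq> m" using n m by auto
          then consider "n > m" | "n < m" by linarith
          then show False
          proof cases
            case 1
            then have "pt n \<le> pt (Suc m)" using pt_anti by simp
            moreover have "d \<le> pt m - pt (Suc m)" unfolding d_def by simp
            ultimately show False using dd n m by (simp add: dist_real_def)
          next
            case 2
            then have "pt (m - 1) \<le> pt n" using pt_anti by simp
            moreover have "d \<le> pt (m - 1) - pt m" unfolding d_def using 2 by simp
            ultimately show False using dd n m by (simp add: dist_real_def)
          qed
        qed
      qed
      then show "dist (\<phi> x') (\<phi> x) < e" using e by simp
    qed
  qed
qed

lemma gap:
  fixes i j N :: nat
  assumes "i \<le> N" "j \<le> N" "\<bar>1 / (real i + 1) - 1 / (real j + 1)\<bar> < 1 / ((real N + 1) * (real N + 2))"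
  shows "i = j"
proof (rule ccontr)
  assume ne: "i \<noteq> j"
  have key: "1 / ((real N + 1) * (real N + 2)) \<le> 1 / (real a + 1) - 1 / (real b + 1)"
    if ab: "a < b" "a \<le> N" for a b :: nat
  proof -
    have "1 / (real b + 1) \<le> 1 / (real a + 2)" using ab by (simp add: frac_le)
    moreover have "1 / (real a + 1) - 1 / (real a + 2) = 1 / ((real a + 1) * (real a + 2))"
      by (simp add: field_simps)
    moreover have "1 / ((real N + 1) * (real N + 2)) \<le> 1 / ((real a + 1) * (real a + 2))"
      using ab by (intro frac_le) (auto intro!: mult_mono)
    ultimately show ?thesis by linarith
  qed
  show False
  proof (cases "i < j")
    case True then show ?thesis using key[of i j] assms by simp
  next
    case False then have "j < i" using ne by simp
    then show ?thesis using key[of j i] assms by (simp add: abs_minus_commute)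
  qed
qed

definition Kset :: "(real \<Rightarrow> real) set" where
  "Kset = {f \<in> topspace (Cp conv_seq). f 0 = 0 \<and> f (pt 0) = 1 \<and>
     (\<forall>n. (f (pt (Suc n)) - f (pt n)) * (f (pt (Suc n)) * (1 + f (pt n)) - f (pt n)) = 0)}"

definition psi :: "nat \<Rightarrow> (real \<Rightarrow> real) \<Rightarrow> real" where
  "psi k f = real (card {n. f (pt n) = 1 / (real k + 1)})"

lemma proj_cont:
  assumes "x \<in> topspace conv_seq"
  shows "continuous_map (Cp conv_seq) euclideanreal (\<lambda>f. f x)"
  unfolding Cp_def
  by (rule continuous_map_from_subtopology[OF continuous_map_product_projection]) (use assms in simp)

lemma pt_in: "pt n \<in> topspace conv_seq" and zero_in: "0 \<in> topspace conv_seq"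
  unfolding topspace_conv_seq by auto

lemma Kset_closed: "closedin (Cp conv_seq) Kset"
proof -
  define H where "H n f = (f (pt (Suc n)) - f (pt n)) * (f (pt (Suc n)) * (1 + f (pt n)) - f (pt n))" for n and f :: "real \<Rightarrow> real"
  have cH: "continuous_map (Cp conv_seq) euclideanreal (H n)" for n
    unfolding H_def
    by (intro continuous_map_real_mult continuous_map_diff continuous_map_add continuous_map_const[THEN iffD2] proj_cont pt_in) auto
  have c1: "closedin (Cp conv_seq) {f \<in> topspace (Cp conv_seq). f 0 \<in> {0}}"
    by (rule closedin_continuous_map_preimage[OF proj_cont[OF zero_in]]) simp
  have c2: "closedin (Cp conv_seq) {f \<in> topspace (Cp conv_seq). f (pt 0) \<in> {1}}"
    by (rule closedin_continuous_map_preimage[OF proj_cont[OF pt_in]]) simp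
  have c3: "closedin (Cp conv_seq) (\<Inter> (range (\<lambda>n. {f \<in> topspace (Cp conv_seq). H n f \<in> {0}})))"
  proof (rule closedin_Inter)
    show "range (\<lambda>n. {f \<in> topspace (Cp conv_seq). H n f \<in> {0}}) \<noteq> {}" by simp
    fix S assume "S \<in> range (\<lambda>n. {f \<in> topspace (Cp conv_seq). H n f \<in> {0}})"
    then obtain n where "S = {f \<in> topspace (Cp conv_seq). H n f \<in> {0}}" by blast
    moreover have "closedin (Cp conv_seq) {f \<in> topspace (Cp conv_seq). H n f \<in> {0}}"
      by (rule closedin_continuous_map_preimage[OF cH]) simp
    ultimately show "closedin (Cp conv_seq) S" by simp
  qed
  have eq: "Kset = {f \<in> topspace (Cp conv_seq). f 0 \<in> {0}} \<inter> {f \<in> topspace (Cp conv_seq). f (pt 0) \<in> {1}}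
      \<inter> (\<Inter> (range (\<lambda>n. {f \<in> topspace (Cp conv_seq). H n f \<in> {0}})))"
    unfolding Kset_def H_def by auto
  show ?thesis unfolding eq by (intro closedin_Int c1 c2 c3)
qed

lemma Kset_cont: "f \<in> Kset \<Longrightarrow> continuous_on (insert 0 (range pt)) f"
  unfolding Kset_def topspace_Cp conv_seq_eq[symmetric] by (simp add: conv_seq_eq)

lemma Kset_vals:
  assumes f: "f \<in> Kset"
  shows "\<exists>j \<le> n. f (pt n) = 1 / (real j + 1)"
proof (induction n)
  case 0 then show ?case using f unfolding Kset_def by auto
next
  case (Suc n)
  then obtain j where j: "j \<le> n" "f (pt n) = 1 / (real j + 1)" by blast
  have "(f (pt (Suc n)) - f (pt n)) * (f (pt (Suc n)) * (1 + f (pt n)) - f (pt n)) = 0"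
    using f unfolding Kset_def by blast
  then consider "f (pt (Suc n)) = f (pt n)" | "f (pt (Suc n)) * (1 + f (pt n)) = f (pt n)" by auto
  then show ?case
  proof cases
    case 1 then show ?thesis using j by (intro exI[of _ j]) simp
  next
    case 2
    have "f (pt n) > 0" using j by simp
    then have pos: "1 + f (pt n) > 0" by linarith
    have "f (pt (Suc n)) = f (pt n) / (1 + f (pt n))" using 2 pos by (simp add: field_simps)
    also have "\<dots> = 1 / (real (Suc j) + 1)"
    proof -
      have "f (pt n) / (1 + f (pt n)) = (1 / (real j + 1)) / (1 + 1 / (real j + 1))" by (simp only: j(2))
      also have "\<dots> = 1 / (real (Suc j) + 1)"
      proof -
        have "real j + 1 > 0" by simp
        then show ?thesis by (simp add: field_simps)
      qed
      finally show ?thesis .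
    qed
    finally show ?thesis using j by (intro exI[of _ "Suc j"]) simp
  qed
qed

lemma Kset_pos: "f \<in> Kset \<Longrightarrow> f (pt n) > 0"
  using Kset_vals[of f n] by auto

lemma Kset_step: "f \<in> Kset \<Longrightarrow> f (pt (Suc n)) \<le> f (pt n)"
proof -
  assume f: "f \<in> Kset"
  have "(f (pt (Suc n)) - f (pt n)) * (f (pt (Suc n)) * (1 + f (pt n)) - f (pt n)) = 0"
    using f unfolding Kset_def by blast
  then consider "f (pt (Suc n)) = f (pt n)" | "f (pt (Suc n)) * (1 + f (pt n)) = f (pt n)" by auto
  then show ?thesis
  proof cases
    case 1 then show ?thesis by simp
  next
    case 2
    have p: "f (pt n) > 0" "f (pt (Suc n)) > 0" using Kset_pos[OF f] by auto
    have "f (pt (Suc n)) * 1 \<le> f (pt (Suc n)) * (1 + f (pt n))" using p by (intro mult_left_mono) auto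
    then show ?thesis using 2 by simp
  qed
qed

lemma Kset_mono: "f \<in> Kset \<Longrightarrow> m \<le> n \<Longrightarrow> f (pt n) \<le> f (pt m)"
proof -
  assume f: "f \<in> Kset" and mn: "m \<le> n"
  have "decseq (\<lambda>n. f (pt n))" by (rule decseq_SucI) (use Kset_step[OF f] in auto)
  then show ?thesis using mn by (simp add: decseq_def)
qed

lemma Kset_lim: "f \<in> Kset \<Longrightarrow> (\<lambda>n. f (pt n)) \<longlonglongrightarrow> 0"
proof -
  assume f: "f \<in> Kset"
  have "(\<lambda>n. f (pt n)) \<longlonglongrightarrow> f 0"
    by (rule continuous_on_tendsto_compose[OF Kset_cont[OF f] pt_lim]) auto
  moreover have "f 0 = 0" using f unfolding Kset_def by blast
  ultimately show ?thesis by simp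
qed

lemma loc_const_cont:
  assumes loc: "\<And>x. x \<in> topspace X \<Longrightarrow> \<exists>U. openin X U \<and> x \<in> U \<and> (\<forall>y\<in>U. g y = g x)"
  shows "continuous_map X euclideanreal g"
  unfolding continuous_map_def
proof (intro conjI allI impI)
  show "g \<in> topspace X \<rightarrow> topspace euclideanreal" by simp
  fix V assume "openin euclideanreal V"
  show "openin X {x \<in> topspace X. g x \<in> V}"
  proof (subst openin_subopen, intro ballI)
    fix x assume x: "x \<in> {x \<in> topspace X. g x \<in> V}"
    then have xt: "x \<in> topspace X" and gx: "g x \<in> V" by simp_all
    obtain U where U: "openin X U" "x \<in> U" "\<forall>y\<in>U. g y = g x" using loc[OF xt] by (elim exE conjE)
    have "U \<subseteq> {x \<in> topspace X. g x \<in> V}"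
    proof
      fix y assume y: "y \<in> U"
      have "y \<in> topspace X" using openin_subset[OF U(1)] y by (rule subsetD)
      moreover have "g y \<in> V" using U(3) y gx by simp
      ultimately show "y \<in> {x \<in> topspace X. g x \<in> V}" by simp
    qed
    then show "\<exists>T. openin X T \<and> x \<in> T \<and> T \<subseteq> {x \<in> topspace X. g x \<in> V}" using U(1,2) by blast
  qed
qed

lemma psi_cont: "continuous_map (subtopology (Cp conv_seq) Kset) euclideanreal (psi k)"
proof (rule loc_const_cont)
  fix f assume "f \<in> topspace (subtopology (Cp conv_seq) Kset)"
  then have f: "f \<in> Kset" by simp
  have fT: "f \<in> topspace (Cp conv_seq)" using f unfolding Kset_def by blast
  define c where "c = 1 / (real k + 1)"
  have c: "c > 0" unfolding c_def by simp
  obtain N where N: "\<And>n. n \<ge> N \<Longrightarrow> dist (f (pt n)) 0 < c" using Kset_lim[OF f] c unfolding lim_sequentially by blast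
  have fN: "f (pt N) < c" using N[of N] Kset_pos[OF f, of N] by (simp add: dist_real_def)
  define \<delta> where "\<delta> = 1 / ((real N + 1) * (real N + 2))"
  have \<delta>: "\<delta> > 0" unfolding \<delta>_def by simp
  define V where "V = \<Inter> ((\<lambda>n. {g \<in> topspace (Cp conv_seq). g (pt n) \<in> {f (pt n) - \<delta><..<f (pt n) + \<delta>}}) ` {..N})"
  have "openin (Cp conv_seq) V"
    unfolding V_def
  proof (rule openin_Inter)
    fix S assume "S \<in> (\<lambda>n. {g \<in> topspace (Cp conv_seq). g (pt n) \<in> {f (pt n) - \<delta><..<f (pt n) + \<delta>}}) ` {..N}"
    then obtain n where "S = {g \<in> topspace (Cp conv_seq). g (pt n) \<in> {f (pt n) - \<delta><..<f (pt n) + \<delta>}}" by blast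
    moreover have "openin (Cp conv_seq) {g \<in> topspace (Cp conv_seq). g (pt n) \<in> {f (pt n) - \<delta><..<f (pt n) + \<delta>}}"
      by (rule openin_continuous_map_preimage[OF proj_cont[OF pt_in]]) simp
    ultimately show "openin (Cp conv_seq) S" by simp
  qed auto
  then have op: "openin (subtopology (Cp conv_seq) Kset) (Kset \<inter> V)" by (rule openin_subtopology_Int2)
  have fV: "f \<in> V" unfolding V_def using fT \<delta> by auto
  have "psi k g = psi k f" if g: "g \<in> Kset \<inter> V" for g
  proof -
    have gK: "g \<in> Kset" using g by blast
    have eqN: "g (pt n) = f (pt n)" if n: "n \<le> N" for n
    proof -
      obtain i where i: "i \<le> n" "g (pt n) = 1 / (real i + 1)" using Kset_vals[OF gK] by blast
      obtain j where j: "j \<le> n" "f (pt n) = 1 / (real j + 1)" using Kset_vals[OF f] by blast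
      have "g (pt n) \<in> {f (pt n) - \<delta><..<f (pt n) + \<delta>}" using g n unfolding V_def by blast
      then have "\<bar>1 / (real i + 1) - 1 / (real j + 1)\<bar> < \<delta>" using i j by (simp add: abs_diff_less_iff)
      then have "i = j" using gap[of i N j] i(1) j(1) n unfolding \<delta>_def by simp
      then show ?thesis using i j by simp
    qed
    have "{n. g (pt n) = c} = {n. f (pt n) = c}"
    proof (intro Collect_cong)
      fix n show "(g (pt n) = c) = (f (pt n) = c)"
      proof (cases "n \<le> N")
        case True then show ?thesis using eqN by simp
      next
        case False
        then have "g (pt n) \<le> g (pt N)" "f (pt n) \<le> f (pt N)" using Kset_mono[OF gK] Kset_mono[OF f] by auto
        moreover have "g (pt N) = f (pt N)" using eqN by simp
        ultimately show ?thesis using fN by auto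
      qed
    qed
    then show ?thesis unfolding psi_def c_def by simp
  qed
  then show "\<exists>U. openin (subtopology (Cp conv_seq) Kset) U \<and> f \<in> U \<and> (\<forall>y\<in>U. psi k y = psi k f)"
    using op f fV by blast
qed

lemma Kset_onto:
  fixes m :: "nat \<Rightarrow> nat"
  shows "\<exists>f\<in>Kset. \<forall>k. psi k f = real (m k + 1)"
proof -
  define cs where "cs k = (\<Sum>i<k. m i + 1)" for k
  have cs_Suc: "cs (Suc k) = cs k + m k + 1" for k unfolding cs_def by simp
  have cs_0: "cs 0 = 0" unfolding cs_def by simp
  have cs_mono: "cs j \<le> cs k" if "j \<le> k" for j k
  proof -
    have "incseq cs" by (rule incseq_SucI) (simp add: cs_Suc)
    then show ?thesis using that by (simp add: incseq_def)
  qed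
  have cs_ge: "k \<le> cs k" for k by (induction k) (simp_all add: cs_0 cs_Suc)
  define lev where "lev n = (LEAST k. n < cs (Suc k))" for n
  have ex: "n < cs (Suc n)" for n using cs_ge[of "Suc n"] by simp
  have lev1: "n < cs (Suc (lev n))" for n unfolding lev_def by (rule LeastI[of _ n]) (rule ex)
  have lev2: "cs (lev n) \<le> n" for n
  proof (cases "lev n")
    case 0 then show ?thesis by (simp add: cs_0)
  next
    case (Suc k)
    then have "k < lev n" by simp
    then have "\<not> n < cs (Suc k)" unfolding lev_def by (rule not_less_Least)
    then show ?thesis using Suc by simp
  qed
  have lev_eq: "lev n = k" if "cs k \<le> n" "n < cs (Suc k)" for n k
    unfolding lev_def
  proof (rule Least_equality)
    show "n < cs (Suc k)" by (rule that(2))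
    fix y assume y: "n < cs (Suc y)"
    show "k \<le> y"
    proof (rule ccontr)
      assume "\<not> k \<le> y"
      then have "Suc y \<le> k" by simp
      then have "cs (Suc y) \<le> cs k" by (rule cs_mono)
      then show False using y that(1) by simp
    qed
  qed
  have levset: "{n. lev n = k} = {cs k..<cs (Suc k)}" for k
  proof (intro set_eqI iffI)
    fix n assume "n \<in> {n. lev n = k}"
    then show "n \<in> {cs k..<cs (Suc k)}" using lev1[of n] lev2[of n] by simp
  next
    fix n assume "n \<in> {cs k..<cs (Suc k)}"
    then show "n \<in> {n. lev n = k}" using lev_eq[of k n] by simp
  qed
  have card_lev: "card {n. lev n = k} = m k + 1" for k unfolding levset by (simp add: cs_Suc)
  have lev0: "lev 0 = 0" by (rule lev_eq) (simp_all add: cs_0 cs_Suc)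
  have levS: "lev (Suc n) = lev n \<or> lev (Suc n) = Suc (lev n)" for n
  proof (cases "Suc n < cs (Suc (lev n))")
    case True
    then have "lev (Suc n) = lev n" using lev2[of n] by (intro lev_eq) auto
    then show ?thesis by simp
  next
    case False
    then have "Suc n = cs (Suc (lev n))" using lev1[of n] by simp
    then have "lev (Suc n) = Suc (lev n)" by (intro lev_eq) (simp_all add: cs_Suc)
    then show ?thesis by simp
  qed
  have lev_big: "k \<le> lev n" if "cs k \<le> n" for k n
  proof (rule ccontr)
    assume "\<not> k \<le> lev n"
    then have "Suc (lev n) \<le> k" by simp
    then have "cs (Suc (lev n)) \<le> cs k" by (rule cs_mono)
    then show False using lev1[of n] that by simp
  qed
  define a where "a n = 1 / (real (lev n) + 1)" for n
  have a_lim: "a \<longlonglongrightarrow> 0"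
    unfolding lim_sequentially
  proof (intro allI impI)
    fix e :: real assume e: "e > 0"
    obtain k where k: "inverse (real (Suc k)) < e" using reals_Archimedean[OF e] by blast
    have "dist (a n) 0 < e" if "n \<ge> cs k" for n
    proof -
      have "k \<le> lev n" using lev_big that by blast
      then have "a n \<le> 1 / (real k + 1)" unfolding a_def by (simp add: frac_le)
      moreover have "a n > 0" unfolding a_def by simp
      ultimately show ?thesis using k by (simp add: dist_real_def inverse_eq_divide add.commute)
    qed
    then show "\<exists>N. \<forall>n\<ge>N. dist (a n) 0 < e" by blast
  qed
  define S where "S = insert 0 (range pt)"
  define f where "f x = (if x \<in> S then (if x = 0 then 0 else a (nat \<lfloor>1 / x\<rfloor> - 1)) else undefined)" for x :: real
  have fpt: "f (pt n) = a n" for n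
  proof -
    have "pt n \<in> S" "pt n \<noteq> 0" unfolding S_def using pt_pos[of n] by auto
    moreover have "1 / pt n = real (Suc n)" unfolding pt_def by simp
    moreover have "nat \<lfloor>real (Suc n)\<rfloor> - 1 = n" by simp
    ultimately show ?thesis unfolding f_def by simp
  qed
  have f0: "f 0 = 0" unfolding f_def S_def by simp
  have fcont: "continuous_on S f"
    unfolding S_def by (rule conv_seq_cont) (simp add: fpt f0 a_lim)
  have fT: "f \<in> topspace (Cp conv_seq)"
  proof -
    have "f \<in> (\<Pi>\<^sub>E i\<in>topspace conv_seq. UNIV)" unfolding topspace_conv_seq S_def[symmetric]
      by (simp add: PiE_iff extensional_def f_def)
    moreover have "continuous_map conv_seq euclideanreal f" unfolding conv_seq_eq S_def[symmetric]
      using fcont by simp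
    ultimately show ?thesis unfolding topspace_Cp by simp
  qed
  have fK: "f \<in> Kset"
    unfolding Kset_def
  proof (intro CollectI conjI allI fT f0)
    show "f (pt 0) = 1" unfolding fpt a_def lev0 by simp
    fix n
    show "(f (pt (Suc n)) - f (pt n)) * (f (pt (Suc n)) * (1 + f (pt n)) - f (pt n)) = 0"
      unfolding fpt
    proof (cases "lev (Suc n) = lev n")
      case True then show "(a (Suc n) - a n) * (a (Suc n) * (1 + a n) - a n) = 0" unfolding a_def by simp
    next
      case False
      then have L: "lev (Suc n) = Suc (lev n)" using levS by blast
      have "a (Suc n) * (1 + a n) - a n = 0"
      proof -
        have "real (lev n) + 1 > 0" by simp
        then show ?thesis unfolding a_def L by (simp add: field_simps)
      qed
      then show "(a (Suc n) - a n) * (a (Suc n) * (1 + a n) - a n) = 0" by simp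
    qed
  qed
  have "psi k f = real (m k + 1)" for k
  proof -
    have "{n. f (pt n) = 1 / (real k + 1)} = {n. lev n = k}"
      unfolding fpt a_def by (intro Collect_cong) (simp add: field_simps)
    then show ?thesis unfolding psi_def by (simp only: card_lev)
  qed
  then show ?thesis using fK by blast
qed

definition interp :: "(nat \<Rightarrow> 'e::real_normed_vector) \<Rightarrow> real \<Rightarrow> 'e" where
  "interp v t = (let s = max 0 t; n = nat \<lfloor>s\<rfloor>; r = s - real n in (1 - r) *\<^sub>R v n + r *\<^sub>R v (Suc n))"

lemma interp_neg: "t \<le> 0 \<Longrightarrow> interp v t = v 0"
  unfolding interp_def Let_def by (simp add: max_def)

lemma interp_piece:
  assumes "real n \<le> t" "t \<le> real n + 1"
  shows "interp v t = (real n + 1 - t) *\<^sub>R v n + (t - real n) *\<^sub>R v (Suc n)"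
proof (cases "t = real n + 1")
  case True
  have m: "max 0 t = real (Suc n)" using True by simp
  have fl: "nat \<lfloor>real (Suc n)\<rfloor> = Suc n" by (simp only: floor_of_nat nat_int)
  show ?thesis unfolding interp_def Let_def m fl using True by simp
next
  case False
  then have lt: "t < real n + 1" using assms by simp
  have t0: "max 0 t = t" using assms by simp
  have "\<lfloor>t\<rfloor> = int n" using assms lt by (simp add: floor_eq_iff)
  then have "nat \<lfloor>t\<rfloor> = n" by simp
  then show ?thesis unfolding interp_def Let_def t0 by (simp add: algebra_simps)
qed

lemma interp_nat: "interp v (real n) = v n"
  using interp_piece[of n "real n" v] by simp

lemma interp_bound:
  assumes "\<And>n. norm (v n) \<le> B"
  shows "norm (interp v t) \<le> B"
proof -
  define s where "s = max 0 t"
  define n where "n = nat \<lfloor>s\<rfloor>"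
  define r where "r = s - real n"
  have s0: "s \<ge> 0" unfolding s_def by simp
  have r: "0 \<le> r" "r \<le> 1" unfolding r_def n_def using s0 by linarith+
  have "interp v t = (1 - r) *\<^sub>R v n + r *\<^sub>R v (Suc n)" unfolding interp_def Let_def s_def[symmetric] n_def[symmetric] r_def[symmetric] ..
  also have "norm \<dots> \<le> norm ((1 - r) *\<^sub>R v n) + norm (r *\<^sub>R v (Suc n))" by (rule norm_triangle_ineq)
  also have "\<dots> = (1 - r) * norm (v n) + r * norm (v (Suc n))" using r by simp
  also have "\<dots> \<le> (1 - r) * B + r * B" using r assms by (intro add_mono mult_left_mono) auto
  finally show ?thesis by (simp add: algebra_simps)
qed

lemma interp_cont: "continuous_on UNIV (interp v)"
proof -
  have cN: "continuous_on {..real N} (interp v)" for N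
  proof (induction N)
    case 0
    have "continuous_on {..real 0} (\<lambda>_. v 0)" by simp
    then show ?case by (rule continuous_on_cong[THEN iffD1, rotated 2]) (auto simp: interp_neg)
  next
    case (Suc N)
    have "continuous_on {real N..real N + 1} (\<lambda>t. (real N + 1 - t) *\<^sub>R v N + (t - real N) *\<^sub>R v (Suc N))"
      by (intro continuous_intros)
    then have c2: "continuous_on {real N..real N + 1} (interp v)"
      by (rule continuous_on_cong[THEN iffD1, rotated 2]) (auto simp: interp_piece)
    have "continuous_on ({..real N} \<union> {real N..real N + 1}) (interp v)"
      by (rule continuous_on_closed_Un[OF _ _ Suc.IH c2]) auto
    moreover have "{..real N} \<union> {real N..real N + 1} = {..real (Suc N)}" by auto
    ultimately show ?case by simp
  qed
  show ?thesis
  proof (rule continuous_at_imp_continuous_on, rule ballI)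
    fix t :: real assume "t \<in> UNIV"
    obtain N where N: "t < real N" using reals_Archimedean2 by blast
    have "continuous_on {..<real N} (interp v)" using cN[of N] by (rule continuous_on_subset) auto
    then show "isCont (interp v) t" using N by (simp add: continuous_on_eq_continuous_at)
  qed
qed

lemma countable_conv_seq: "countable (topspace conv_seq)"
  unfolding topspace_conv_seq by simp

lemma normal_Cp_conv_seq: "normal_space (Cp conv_seq)"
proof -
  have "metrizable_space (product_topology (\<lambda>_. euclideanreal) (topspace conv_seq))"
    unfolding metrizable_space_product_topology
  proof (rule disjI2, rule conjI)
    show "countable {i \<in> topspace conv_seq. \<not> (\<exists>a. topspace euclideanreal \<subseteq> {a})}"
      by (rule countable_subset[OF _ countable_conv_seq]) blast
    show "\<forall>i\<in>topspace conv_seq. metrizable_space euclideanreal" by (simp add: metrizable_space_euclidean)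
  qed
  then have "metrizable_space (Cp conv_seq)" unfolding Cp_def by (rule metrizable_space_subtopology)
  then show ?thesis by (rule metrizable_imp_normal_space)
qed

lemma Psi_exists: "\<exists>\<Psi>. \<forall>k. continuous_map (Cp conv_seq) euclideanreal (\<Psi> k) \<and> (\<forall>f\<in>Kset. \<Psi> k f = psi k f)"
proof -
  have "\<exists>h. continuous_map (Cp conv_seq) euclideanreal h \<and> (\<forall>f\<in>Kset. h f = psi k f)" for k
  proof -
    obtain h where "continuous_map (Cp conv_seq) euclideanreal h" "\<And>x. x \<in> Kset \<Longrightarrow> h x = psi k x"
      using Tietze_extension_realinterval[OF normal_Cp_conv_seq Kset_closed, of UNIV "psi k"] psi_cont[of k]
      by auto
    then show ?thesis by blast
  qed
  then show ?thesis by metis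
qed

lemma convseq_onto:
  assumes sep: "separable_space (euclidean :: ('e::banach) topology)"
  shows "\<exists>T. continuous_map (Cp conv_seq) euclidean T \<and> T ` topspace (Cp conv_seq) = (UNIV :: 'e set)"
proof -
  obtain \<Psi> where \<Psi>c: "\<And>k. continuous_map (Cp conv_seq) euclideanreal (\<Psi> k)"
    and \<Psi>K: "\<And>k f. f \<in> Kset \<Longrightarrow> \<Psi> k f = psi k f"
    using Psi_exists by blast
  obtain D where D: "countable D" "closure D = (UNIV :: 'e set)"
    using sep unfolding separable_space_def by auto
  have Dne: "D \<noteq> {}" using D(2) by auto
  define u where "u = from_nat_into D"
  have uD: "range u = D" unfolding u_def using Dne D(1) by simp
  have dense: "\<exists>n. norm (r - u n) < \<epsilon> \<and> norm (u n) < \<rho>" if "norm r < \<rho>" "\<epsilon> > 0" for r :: 'e and \<rho> \<epsilon>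
  proof -
    have "min \<epsilon> (\<rho> - norm r) > 0" using that by simp
    moreover have "r \<in> closure D" using D(2) by simp
    ultimately obtain d where d: "d \<in> D" "dist d r < min \<epsilon> (\<rho> - norm r)" unfolding closure_approachable by blast
    obtain n where n: "d = u n" using d(1) uD by blast
    have "norm d \<le> norm r + dist d r" by (metis dist_norm norm_triangle_sub add.commute)
    then show ?thesis using d(2) n by (intro exI[of _ n]) (auto simp: dist_norm norm_minus_commute)
  qed
  define v where "v k n = (if k = 0 then u n else if norm (u n) < (1/2)^k then u n else 0)" for k n
  define G where "G k t = interp (v k) (t - 1)" for k t
  have Gc: "continuous_on UNIV (G k)" for k
  proof -
    have "continuous_on UNIV (interp (v k) \<circ> (\<lambda>t. t - 1))"
      by (rule continuous_on_compose) (auto intro!: continuous_intros interp_cont[THEN continuous_on_subset])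
    then show ?thesis unfolding G_def o_def .
  qed
  have Gv: "G k (real (m + 1)) = v k m" for k m unfolding G_def using interp_nat[of "v k" m] by simp
  have Gb: "norm (G k t) \<le> (1/2)^k" if "k \<ge> 1" for k t
    unfolding G_def by (rule interp_bound) (use that in \<open>auto simp: v_def\<close>)
  define X where "X f k = G k (\<Psi> k f)" for f k
  have Xb: "norm (X f k) \<le> (1/2)^k" if "k \<ge> 1" for f k unfolding X_def using Gb that by blast
  have geo: "summable (\<lambda>k. (1/2::real)^k)" by (rule summable_geometric) simp
  have Xs: "summable (X f)" for f by (rule summable_comparison_test'[OF geo, of 1]) (use Xb in auto)
  define T where "T f = suminf (X f)" for f
  define Sn where "Sn n f = (\<Sum>k<n. X f k)" for n f
  have tail: "norm (T f - Sn n f) \<le> 2 * (1/2)^n" if "n \<ge> 1" for f n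
  proof -
    have "T f = (\<Sum>k. X f (k + n)) + Sn n f" unfolding T_def Sn_def by (rule suminf_split_initial_segment[OF Xs])
    then have "T f - Sn n f = (\<Sum>k. X f (k + n))" by simp
    also have "norm \<dots> \<le> (\<Sum>k. (1/2)^(k + n))"
    proof (rule norm_suminf_le)
      show "norm (X f (k + n)) \<le> (1/2)^(k + n)" for k using Xb that by simp
      show "summable (\<lambda>k. (1/2::real)^(k + n))" using geo by (simp add: power_add summable_mult2)
    qed
    also have "(\<Sum>k. (1/2::real)^(k + n)) = 2 * (1/2)^n"
    proof -
      have "(\<Sum>k. (1/2::real)^(k + n)) = (\<Sum>k. (1/2)^k * (1/2)^n)" by (simp add: power_add)
      also have "\<dots> = (\<Sum>k. (1/2::real)^k) * (1/2)^n" by (rule suminf_mult2[OF geo, symmetric])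
      also have "(\<Sum>k. (1/2::real)^k) = 2" using suminf_geometric[of "1/2::real"] by simp
      finally show ?thesis by simp
    qed
    finally show ?thesis .
  qed
  have Snc: "continuous_map (Cp conv_seq) euclidean (Sn n)" for n
  proof -
    have cX: "continuous_map (Cp conv_seq) euclidean (\<lambda>f. X f k)" for k
      unfolding X_def using continuous_map_compose[OF \<Psi>c[of k], of euclidean "G k"] Gc[of k]
      by (simp add: o_def)
    show ?thesis unfolding Sn_def by (intro continuous_map_sum cX) simp
  qed
  have Tc: "continuous_map (Cp conv_seq) euclidean T"
  proof -
    have "continuous_map (Cp conv_seq) Met_TC.mtopology T"
    proof (rule Met_TC.continuous_map_uniform_limit[where F=sequentially and f=Sn])
      show "\<forall>\<^sub>F n in sequentially. continuous_map (Cp conv_seq) Met_TC.mtopology (Sn n)"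
        using Snc by simp
      fix \<epsilon> :: real assume e: "\<epsilon> > 0"
      obtain N where N: "(1/2::real)^N < \<epsilon>/2"
        using real_arch_pow_inv[of "\<epsilon>/2" "1/2::real"] e by auto
      have "\<forall>x\<in>topspace (Cp conv_seq). T x \<in> UNIV \<and> dist (Sn n x) (T x) < \<epsilon>" if "n \<ge> max N 1" for n
      proof (intro ballI conjI)
        fix x show "T x \<in> UNIV" by simp
        have "dist (Sn n x) (T x) = norm (T x - Sn n x)" by (simp add: dist_norm norm_minus_commute)
        also have "\<dots> \<le> 2 * (1/2)^n" using tail that by simp
        also have "(1/2::real)^n \<le> (1/2)^N" using that by (intro power_decreasing) auto
        finally show "dist (Sn n x) (T x) < \<epsilon>" using N by simp
      qed
      then show "\<forall>\<^sub>F n in sequentially. \<forall>x\<in>topspace (Cp conv_seq). T x \<in> UNIV \<and> dist (Sn n x) (T x) < \<epsilon>"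
        unfolding eventually_sequentially by blast
    qed simp
    then show ?thesis by simp
  qed
  have "T ` topspace (Cp conv_seq) = UNIV"
  proof (intro set_eqI iffI)
    fix y :: 'e assume "y \<in> UNIV"
    define sel where "sel k r = (SOME n. norm (r - v k n) < (1/2)^(Suc k))" for k r
    define res where "res = rec_nat y (\<lambda>k r. r - v k (sel k r))"
    have res0: "res 0 = y" and resS: "res (Suc k) = res k - v k (sel k (res k))" for k
      unfolding res_def by simp_all
    have sel_ok: "norm (r - v k (sel k r)) < (1/2)^(Suc k)" if "k = 0 \<or> norm r < (1/2)^k" for k r
    proof -
      have "\<exists>n. norm (r - v k n) < (1/2)^(Suc k)"
      proof (cases "k = 0")
        case True
        obtain n where "norm (r - u n) < 1/2" using dense[of r "norm r + 1" "1/2"] by auto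
        then show ?thesis using True by (auto simp: v_def)
      next
        case False
        then have r: "norm r < (1/2)^k" using that by simp
        obtain n where n: "norm (r - u n) < (1/2)^(Suc k)" "norm (u n) < (1/2)^k"
          using dense[OF r, of "(1/2)^(Suc k)"] by auto
        then show ?thesis using False by (intro exI[of _ n]) (simp add: v_def)
      qed
      then show ?thesis unfolding sel_def by (rule someI_ex)
    qed
    have res_small: "norm (res (Suc k)) < (1/2)^(Suc k)" for k
    proof (induction k)
      case 0 then show ?case using sel_ok[of 0 y] by (simp add: res0 resS)
    next
      case (Suc k)
      have "norm (res (Suc k) - v (Suc k) (sel (Suc k) (res (Suc k)))) < (1/2)^(Suc (Suc k))"
        by (rule sel_ok) (use Suc.IH in blast)
      then show ?case by (simp only: resS[of "Suc k"])
    qed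
    define m where "m k = sel k (res k)" for k
    have partial: "(\<Sum>i<n. v i (m i)) = y - res n" for n
      by (induction n) (simp_all add: res0 resS m_def)
    have "(\<lambda>n. y - res n) \<longlonglongrightarrow> y - 0"
    proof (intro tendsto_diff tendsto_const)
      have "(\<lambda>n. res (Suc n)) \<longlonglongrightarrow> 0"
      proof (rule tendsto_norm_zero_cancel, rule Lim_null_comparison[OF _ LIMSEQ_power_zero[of "1/2::real"]])
        show "\<forall>\<^sub>F n in sequentially. norm (norm (res (Suc n))) \<le> (1/2)^n"
        proof (intro always_eventually allI)
          fix n
          have "(1/2::real)^(Suc n) \<le> (1/2)^n" by (simp add: power_Suc)
          then show "norm (norm (res (Suc n))) \<le> (1/2)^n" using res_small[of n] by (simp only: real_norm_def abs_norm_cancel)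
        qed
      qed simp
      then show "res \<longlonglongrightarrow> 0" by (rule LIMSEQ_imp_Suc)
    qed
    then have sums: "(\<lambda>k. v k (m k)) sums y" unfolding sums_def partial by simp
    obtain f where fK: "f \<in> Kset" and fpsi: "\<And>k. psi k f = real (m k + 1)" using Kset_onto[of m] by blast
    have "X f k = v k (m k)" for k unfolding X_def \<Psi>K[OF fK] fpsi Gv ..
    then have "X f = (\<lambda>k. v k (m k))" by (intro ext)
    then have "T f = y" unfolding T_def using sums_unique[OF sums] by simp
    moreover have "f \<in> topspace (Cp conv_seq)" using fK unfolding Kset_def by blast
    ultimately show "y \<in> T ` topspace (Cp conv_seq)" by blast
  qed simp
  then show ?thesis using Tc by blast
qed

theorem corollary3p2:
  fixes S :: "'s topology"
  assumes "S homeomorphic_space conv_seq"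
  shows "(\<exists>T :: ('s \<Rightarrow> real) \<Rightarrow> 'e::banach.
            continuous_map (Cp S) weak_topology T \<and>
            T ` topspace (Cp S) = topspace (weak_topology :: 'e topology))
         \<longleftrightarrow> separable_space (euclidean :: 'e topology)"
proof
  assume "\<exists>T :: ('s \<Rightarrow> real) \<Rightarrow> 'e.
            continuous_map (Cp S) weak_topology T \<and>
            T ` topspace (Cp S) = topspace (weak_topology :: 'e topology)"
  then obtain T :: "('s \<Rightarrow> real) \<Rightarrow> 'e" where T: "continuous_map (Cp S) weak_topology T"
    "T ` topspace (Cp S) = topspace (weak_topology :: 'e topology)" by blast
  have "conv_seq homeomorphic_space S" using assms by (rule homeomorphic_space_sym[THEN iffD1])
  then obtain g where "homeomorphic_map conv_seq S g" unfolding homeomorphic_space by blast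
  then have "g ` topspace conv_seq = topspace S" by (rule homeomorphic_imp_surjective_map)
  then have "countable (topspace S)" using countable_conv_seq by (metis countable_image)
  then have "separable_space (Cp S)" by (rule separable_Cp)
  then have "separable_space (weak_topology :: 'e topology)"
    using separable_space_continuous_map_image T by blast
  then show "separable_space (euclidean :: 'e topology)" by (rule weak_separable_imp_separable)
next
  assume sep: "separable_space (euclidean :: 'e topology)"
  obtain T0 :: "(real \<Rightarrow> real) \<Rightarrow> 'e" where T0: "continuous_map (Cp conv_seq) euclidean T0"
    "T0 ` topspace (Cp conv_seq) = UNIV"
    using convseq_onto[OF sep] by blast
  obtain \<Phi> where \<Phi>: "continuous_map (Cp S) (Cp conv_seq) \<Phi>" "\<Phi> ` topspace (Cp S) = topspace (Cp conv_seq)"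
    using Cp_transfer[OF assms] by blast
  have "continuous_map (Cp S) euclidean (T0 \<circ> \<Phi>)" using continuous_map_compose[OF \<Phi>(1) T0(1)] .
  then have "continuous_map (Cp S) weak_topology (T0 \<circ> \<Phi>)" by (rule continuous_map_to_weak)
  moreover have "(T0 \<circ> \<Phi>) ` topspace (Cp S) = topspace (weak_topology :: 'e topology)"
  proof -
    have "(T0 \<circ> \<Phi>) ` topspace (Cp S) = T0 ` (\<Phi> ` topspace (Cp S))" by (rule image_comp[symmetric])
    also have "\<dots> = UNIV" unfolding \<Phi>(2) T0(2) ..
    finally show ?thesis by simp
  qed
  ultimately show "\<exists>T :: ('s \<Rightarrow> real) \<Rightarrow> 'e.
            continuous_map (Cp S) weak_topology T \<and>
            T ` topspace (Cp S) = topspace (weak_topology :: 'e topology)" by blast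
qed

end
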